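(* Let $\mathfrak{n}$ be the real $7$-dimensional Lie algebra with basis $e_1,\dots,e_7$ whose nonzero brackets (up to antisymmetry) are $[e_1,e_2]=e_4$, $[e_1,e_4]=e_5$, $[e_1,e_5]=e_6$, $[e_2,e_3]=e_6$, $[e_2,e_4]=e_6$, $[e_2,e_6]=e_7$, $[e_4,e_5]=-e_7$. Then $\mathfrak{n}$ is not an Einstein nilradical.
   Context: A real nilpotent Lie algebra $\mathfrak{n}$ is called an Einstein nilradical if it admits an inner product such that the left-invariant Riemannian metric it defines on the simply connected nilpotent Lie group with Lie algebra $\mathfrak{n}$ is a nilsoliton, i.e. its Ricci operator satisfies $\mathrm{Ric}=c\,\mathrm{Id}+D$ for some $c\in\mathbb{R}$ and some derivation $D$ of $\mathfrak{n}$. Brackets of basis elements not listed are zero. *)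

theory Defs
  imports "HOL-Analysis.Analysis"
begin

definition inner_product_on :: "(real^'n \<Rightarrow> real^'n \<Rightarrow> real) \<Rightarrow> bool" where
  "inner_product_on B \<longleftrightarrow>
     (\<forall>x. linear (B x)) \<and> (\<forall>x y. B x y = B y x) \<and> (\<forall>x. x \<noteq> 0 \<longrightarrow> B x x > 0)"

definition orthonormal_basis :: "(real^'n \<Rightarrow> real^'n \<Rightarrow> real) \<Rightarrow> ('n \<Rightarrow> real^'n) \<Rightarrow> bool" where
  "orthonormal_basis B f \<longleftrightarrow> (\<forall>i j. B (f i) (f j) = (if i = j then 1 else 0))"

text \<open>Ricci form of a nilpotent metric Lie algebra (standard formula),
  computed in an orthonormal basis f:
  <Ric X, Y> = -1/2 sum_i <[X,f_i],[Y,f_i]> + 1/4 sum_{i,j} <[f_i,f_j],X> <[f_i,f_j],Y>.\<close>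
definition ricci_form ::
  "(real^'n \<Rightarrow> real^'n \<Rightarrow> real^'n) \<Rightarrow> (real^'n \<Rightarrow> real^'n \<Rightarrow> real) \<Rightarrow> ('n \<Rightarrow> real^'n)
     \<Rightarrow> real^'n \<Rightarrow> real^'n \<Rightarrow> real" where
  "ricci_form br B f X Y =
     - (1/2) * (\<Sum>i\<in>UNIV. B (br X (f i)) (br Y (f i)))
     + (1/4) * (\<Sum>i\<in>UNIV. \<Sum>j\<in>UNIV. B (br (f i) (f j)) X * B (br (f i) (f j)) Y)"

definition is_derivation :: "(real^'n \<Rightarrow> real^'n \<Rightarrow> real^'n) \<Rightarrow> (real^'n \<Rightarrow> real^'n) \<Rightarrow> bool" where
  "is_derivation br D \<longleftrightarrow> linear D \<and> (\<forall>x y. D (br x y) = br (D x) y + br x (D y))"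

text \<open>Ric = c Id + D, expressed through the inner product: <Ric X, Y> = c <X,Y> + <D X, Y>.\<close>
definition nilsoliton :: "(real^'n \<Rightarrow> real^'n \<Rightarrow> real^'n) \<Rightarrow> (real^'n \<Rightarrow> real^'n \<Rightarrow> real) \<Rightarrow> bool" where
  "nilsoliton br B \<longleftrightarrow>
     (\<exists>f. orthonormal_basis B f \<and>
       (\<exists>c D. is_derivation br D \<and>
          (\<forall>X Y. ricci_form br B f X Y = c * B X Y + B (D X) Y)))"

definition einstein_nilradical :: "(real^'n \<Rightarrow> real^'n \<Rightarrow> real^'n) \<Rightarrow> bool" where
  "einstein_nilradical br \<longleftrightarrow> (\<exists>B. inner_product_on B \<and> nilsoliton br B)"

text \<open>The 7-dimensional algebra: e_k is axis k 1 (with 7 = 0 in type 7);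
  [e1,e2]=e4, [e1,e4]=e5, [e1,e5]=e6, [e2,e3]=e6, [e2,e4]=e6, [e2,e6]=e7, [e4,e5]=-e7.\<close>
definition br7 :: "real^7 \<Rightarrow> real^7 \<Rightarrow> real^7" where
  "br7 x y =
     (x$1 * y$2 - x$2 * y$1) *\<^sub>R axis 4 1
   + (x$1 * y$4 - x$4 * y$1) *\<^sub>R axis 5 1
   + ((x$1 * y$5 - x$5 * y$1) + (x$2 * y$3 - x$3 * y$2) + (x$2 * y$4 - x$4 * y$2)) *\<^sub>R axis 6 1
   + ((x$2 * y$6 - x$6 * y$2) - (x$4 * y$5 - x$5 * y$4)) *\<^sub>R axis 7 1"

end

theory Submission
  imports Defs
begin

lemma UNIV7: "(UNIV::7 set) = {1,2,3,4,5,6,7}"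
proof -
  have f: "finite (UNIV::7 set)" by simp
  have s: "{1,2,3,4,5,6,7::7} \<subseteq> UNIV" by simp
  have c: "card {1,2,3,4,5,6,7::7} = CARD(7)" by simp
  show ?thesis using card_subset_eq[OF f s c] by (rule sym)
qed

lemma sum7: "(\<Sum>i\<in>(UNIV::7 set). f i) = f 1 + f 2 + f 3 + f 4 + f 5 + f 6 + f 7"
  unfolding UNIV7 by (simp add: add.assoc)

lemma all7: "(\<forall>i::7. P i) \<longleftrightarrow> P 1 \<and> P 2 \<and> P 3 \<and> P 4 \<and> P 5 \<and> P 6 \<and> P 7"
  by (metis UNIV7 UNIV_I empty_iff insert_iff)

section \<open>Bilinear forms\<close>

lemma B_lin: "inner_product_on B \<Longrightarrow> linear (B x)"
  by (simp add: inner_product_on_def)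
lemma B_sym: "inner_product_on B \<Longrightarrow> B x y = B y x"
  by (simp add: inner_product_on_def)
lemma B_pos: "inner_product_on B \<Longrightarrow> x \<noteq> 0 \<Longrightarrow> B x x > 0"
  by (simp add: inner_product_on_def)

lemma B_add2: "inner_product_on B \<Longrightarrow> B x (y + z) = B x y + B x z"
  using B_lin linear_add by blast
lemma B_diff2: "inner_product_on B \<Longrightarrow> B x (y - z) = B x y - B x z"
  using B_lin linear_diff by blast
lemma B_scale2: "inner_product_on B \<Longrightarrow> B x (r *\<^sub>R y) = r * B x y"
  using B_lin[of B x] linear_cmul[of "B x" r y] by simp
lemma B_sum2: "inner_product_on B \<Longrightarrow> B x (\<Sum>i\<in>S. g i) = (\<Sum>i\<in>S. B x (g i))"
  using B_lin linear_sum by blast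
lemma B_zero2: "inner_product_on B \<Longrightarrow> B x 0 = 0"
  using B_lin linear_0 by blast
lemma B_add1: "inner_product_on B \<Longrightarrow> B (y + z) x = B y x + B z x"
  using B_sym[of B "y+z" x] B_sym[of B y x] B_sym[of B z x] B_add2[of B x y z] by simp
lemma B_diff1: "inner_product_on B \<Longrightarrow> B (y - z) x = B y x - B z x"
  using B_sym[of B "y-z" x] B_sym[of B y x] B_sym[of B z x] B_diff2[of B x y z] by simp
lemma B_scale1: "inner_product_on B \<Longrightarrow> B (r *\<^sub>R y) x = r * B y x"
  using B_sym[of B "r *\<^sub>R y" x] B_sym[of B y x] B_scale2[of B x r y] by simp
lemma B_sum1: "inner_product_on B \<Longrightarrow> B (\<Sum>i\<in>S. g i) x = (\<Sum>i\<in>S. B (g i) x)"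
proof -
  assume ip: "inner_product_on B"
  have "B (\<Sum>i\<in>S. g i) x = B x (\<Sum>i\<in>S. g i)" by (rule B_sym[OF ip])
  also have "\<dots> = (\<Sum>i\<in>S. B x (g i))" by (rule B_sum2[OF ip])
  also have "\<dots> = (\<Sum>i\<in>S. B (g i) x)" by (rule sum.cong, simp, rule B_sym[OF ip])
  finally show ?thesis .
qed
lemma B_zero1: "inner_product_on B \<Longrightarrow> B 0 x = 0"
  using B_sym[of B 0 x] B_zero2[of B x] by simp
lemma B_neg1: "inner_product_on B \<Longrightarrow> B (- y) x = - B y x"
  using B_scale1[of B "-1" y x] by simp
lemma B_neg2: "inner_product_on B \<Longrightarrow> B x (- y) = - B x y"
  using B_scale2[of B x "-1" y] by simp

lemmas B_simps = B_add1 B_add2 B_diff1 B_diff2 B_scale1 B_scale2 B_sum1 B_sum2 B_zero1 B_zero2 B_neg1 B_neg2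

lemma B_self_zero: "inner_product_on B \<Longrightarrow> B x x = 0 \<Longrightarrow> x = 0"
  using B_pos by fastforce

lemma cases7: "(i::7) = 1 \<or> i = 2 \<or> i = 3 \<or> i = 4 \<or> i = 5 \<or> i = 6 \<or> i = 7"
  using UNIV_I[of i] unfolding UNIV7 by blast

section \<open>Orthonormal bases\<close>

lemma ortho_coeff:
  assumes ip: "inner_product_on B" and on: "orthonormal_basis B (h::'n::finite \<Rightarrow> real^'n)"
  shows "B (\<Sum>i\<in>UNIV. a i *\<^sub>R h i) (h j) = a j"
proof -
  have "B (\<Sum>i\<in>UNIV. a i *\<^sub>R h i) (h j) = (\<Sum>i\<in>UNIV. a i * B (h i) (h j))"
    by (simp add: B_sum1[OF ip] B_scale1[OF ip])
  also have "\<dots> = (\<Sum>i\<in>UNIV. if j = i then a i else 0)"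
    by (rule sum.cong) (use on in \<open>auto simp: orthonormal_basis_def\<close>)
  also have "\<dots> = a j" by simp
  finally show ?thesis .
qed

lemma ortho_expand:
  assumes ip: "inner_product_on B" and on: "orthonormal_basis B (h::'n::finite \<Rightarrow> real^'n)"
  shows "v = (\<Sum>i\<in>UNIV. B v (h i) *\<^sub>R h i)"
proof -
  define Q where "Q = (\<lambda>a::real^'n. \<Sum>i\<in>UNIV. a$i *\<^sub>R h i)"
  have lQ: "linear Q"
  proof (rule linearI)
    show "Q (a + b) = Q a + Q b" for a b
      unfolding Q_def by (simp add: scaleR_add_left sum.distrib)
    show "Q (r *\<^sub>R a) = r *\<^sub>R Q a" for r a
      unfolding Q_def by (simp add: scaleR_sum_right)
  qed
  have cQ: "B (Q a) (h j) = a$j" for a j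
    unfolding Q_def by (rule ortho_coeff[OF ip on])
  have "inj Q"
  proof (rule injI)
    fix a b assume "Q a = Q b"
    then have "a$j = b$j" for j using cQ[of a j] cQ[of b j] by simp
    then show "a = b" by (simp add: vec_eq_iff)
  qed
  then have "surj Q" using lQ linear_inj_imp_surj by blast
  then obtain a where va: "v = Q a" by (metis surjD)
  have ai: "B v (h i) = a$i" for i using cQ va by simp
  have "v = Q a" by (fact va)
  also have "\<dots> = (\<Sum>i\<in>UNIV. B v (h i) *\<^sub>R h i)" unfolding Q_def ai by simp
  finally show ?thesis .
qed

lemma parseval:
  assumes ip: "inner_product_on B" and on: "orthonormal_basis B (h::'n::finite \<Rightarrow> real^'n)"
  shows "B u w = (\<Sum>i\<in>UNIV. B u (h i) * B w (h i))"
proof -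
  have "B u w = B (\<Sum>i\<in>UNIV. B u (h i) *\<^sub>R h i) w"
    using arg_cong[OF ortho_expand[OF ip on, of u], of "\<lambda>z. B z w"] .
  also have "\<dots> = (\<Sum>i\<in>UNIV. B u (h i) * B (h i) w)"
    by (simp add: B_sum1[OF ip] B_scale1[OF ip])
  also have "\<dots> = (\<Sum>i\<in>UNIV. B u (h i) * B w (h i))"
    by (rule sum.cong, simp, simp add: B_sym[OF ip, of "h _" w])
  finally show ?thesis .
qed

lemma riesz_indep:
  assumes ip: "inner_product_on B" and of: "orthonormal_basis B (f::'n::finite \<Rightarrow> real^'n)"
    and og: "orthonormal_basis B g" and lphi: "linear (phi :: real^'n \<Rightarrow> real)"
    and lpsi: "linear (psi :: real^'n \<Rightarrow> real)"
  shows "(\<Sum>i\<in>UNIV. phi (f i) * psi (f i)) = (\<Sum>i\<in>UNIV. phi (g i) * psi (g i))"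
proof -
  define r where "r = (\<Sum>i\<in>UNIV. phi (f i) *\<^sub>R f i)"
  define r' where "r' = (\<Sum>i\<in>UNIV. phi (g i) *\<^sub>R g i)"
  have rep: "B (\<Sum>i\<in>UNIV. phi (h i) *\<^sub>R h i) x = phi x" if oh: "orthonormal_basis B h" for h x
  proof -
    have "B (\<Sum>i\<in>UNIV. phi (h i) *\<^sub>R h i) x = (\<Sum>i\<in>UNIV. phi (h i) * B (h i) x)"
      by (simp add: B_sum1[OF ip] B_scale1[OF ip])
    also have "\<dots> = (\<Sum>i\<in>UNIV. B x (h i) * phi (h i))"
      by (rule sum.cong, simp, simp add: B_sym[OF ip, of "h _" x])
    also have "\<dots> = phi (\<Sum>i\<in>UNIV. B x (h i) *\<^sub>R h i)"
      using lphi by (simp add: linear_sum linear_cmul)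
    also have "\<dots> = phi x" using arg_cong[OF ortho_expand[OF ip oh, of x], of phi] by (rule sym)
    finally show ?thesis .
  qed
  have "B (r - r') (r - r') = 0"
    unfolding B_diff1[OF ip] unfolding r_def r'_def using rep[OF of] rep[OF og] by simp
  then have rr: "r = r'" using B_self_zero[OF ip, of "r - r'"] by simp
  have e: "(\<Sum>i\<in>UNIV. phi (h i) * psi (h i)) = psi (\<Sum>i\<in>UNIV. phi (h i) *\<^sub>R h i)" for h
    using lpsi by (simp add: linear_sum linear_cmul)
  show ?thesis using e[of f] e[of g] rr unfolding r_def r'_def by simp
qed

lemma br7_lin2: "linear (br7 x)"
  by (rule linearI) (simp_all add: vec_eq_iff br7_def algebra_simps)
lemma br7_lin1: "linear (\<lambda>y. br7 y x)"
  by (rule linearI) (simp_all add: vec_eq_iff br7_def algebra_simps)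
lemma br7_anti: "br7 x y = - br7 y x"
  by (simp add: vec_eq_iff br7_def algebra_simps)

lemma br7_add1: "br7 (x + y) z = br7 x z + br7 y z"
  using br7_lin1 linear_add by fastforce
lemma br7_add2: "br7 z (x + y) = br7 z x + br7 z y"
  using br7_lin2 linear_add by fastforce
lemma br7_diff1: "br7 (x - y) z = br7 x z - br7 y z"
  using br7_lin1 linear_diff by fastforce
lemma br7_diff2: "br7 z (x - y) = br7 z x - br7 z y"
  using br7_lin2 linear_diff by fastforce
lemma br7_scale1: "br7 (r *\<^sub>R x) z = r *\<^sub>R br7 x z"
  using br7_lin1 linear_cmul by fastforce
lemma br7_scale2: "br7 z (r *\<^sub>R x) = r *\<^sub>R br7 z x"
  using br7_lin2 linear_cmul by fastforce
lemma br7_sum1: "br7 (\<Sum>i\<in>S. g i) z = (\<Sum>i\<in>S. br7 (g i) z)"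
  using br7_lin1[of z] linear_sum[of "\<lambda>y. br7 y z" g S] by simp
lemma br7_sum2: "br7 z (\<Sum>i\<in>S. g i) = (\<Sum>i\<in>S. br7 z (g i))"
  using br7_lin2 linear_sum by fastforce
lemma br7_zero1: "br7 0 z = 0"
  using br7_lin1 linear_0 by fastforce
lemma br7_zero2: "br7 z 0 = 0"
  using br7_lin2 linear_0 by fastforce

lemmas br7_simps = br7_add1 br7_add2 br7_diff1 br7_diff2 br7_scale1 br7_scale2 br7_sum1 br7_sum2 br7_zero1 br7_zero2

lemma lin_B_comp:
  assumes ip: "inner_product_on B" and L: "linear L"
  shows "linear (\<lambda>z. B (L z) w)"
  by (rule linearI) (simp_all add: linear_add[OF L] linear_cmul[OF L] B_simps[OF ip])

lemma ricci_indep: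
  assumes ip: "inner_product_on B" and of: "orthonormal_basis B (f::7 \<Rightarrow> real^7)"
    and og: "orthonormal_basis B g"
  shows "ricci_form br7 B f X Y = ricci_form br7 B g X Y"
proof -
  have T1: "(\<Sum>i\<in>UNIV. B (br7 X (f i)) (br7 Y (f i))) = (\<Sum>i\<in>UNIV. B (br7 X (g i)) (br7 Y (g i)))"
  proof -
    have "(\<Sum>i\<in>UNIV. B (br7 X (f i)) (br7 Y (f i)))
        = (\<Sum>i\<in>UNIV. \<Sum>k\<in>UNIV. B (br7 X (f i)) (g k) * B (br7 Y (f i)) (g k))"
      by (rule sum.cong, simp, rule parseval[OF ip og])
    also have "\<dots> = (\<Sum>k\<in>UNIV. \<Sum>i\<in>UNIV. B (br7 X (f i)) (g k) * B (br7 Y (f i)) (g k))"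
      by (rule sum.swap)
    also have "\<dots> = (\<Sum>k\<in>UNIV. \<Sum>i\<in>UNIV. B (br7 X (g i)) (g k) * B (br7 Y (g i)) (g k))"
      by (rule sum.cong, simp, rule riesz_indep[OF ip of og lin_B_comp[OF ip br7_lin2] lin_B_comp[OF ip br7_lin2]])
    also have "\<dots> = (\<Sum>i\<in>UNIV. \<Sum>k\<in>UNIV. B (br7 X (g i)) (g k) * B (br7 Y (g i)) (g k))"
      by (rule sum.swap)
    also have "\<dots> = (\<Sum>i\<in>UNIV. B (br7 X (g i)) (br7 Y (g i)))"
      by (rule sum.cong, simp, rule parseval[OF ip og, symmetric])
    finally show ?thesis .
  qed
  have T2: "(\<Sum>i\<in>UNIV. \<Sum>j\<in>UNIV. B (br7 (f i) (f j)) X * B (br7 (f i) (f j)) Y)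
          = (\<Sum>i\<in>UNIV. \<Sum>j\<in>UNIV. B (br7 (g i) (g j)) X * B (br7 (g i) (g j)) Y)"
  proof -
    have "(\<Sum>i\<in>UNIV. \<Sum>j\<in>UNIV. B (br7 (f i) (f j)) X * B (br7 (f i) (f j)) Y)
        = (\<Sum>i\<in>UNIV. \<Sum>j\<in>UNIV. B (br7 (f i) (g j)) X * B (br7 (f i) (g j)) Y)"
      by (rule sum.cong, simp, rule riesz_indep[OF ip of og lin_B_comp[OF ip br7_lin2] lin_B_comp[OF ip br7_lin2]])
    also have "\<dots> = (\<Sum>j\<in>UNIV. \<Sum>i\<in>UNIV. B (br7 (f i) (g j)) X * B (br7 (f i) (g j)) Y)"
      by (rule sum.swap)
    also have "\<dots> = (\<Sum>j\<in>UNIV. \<Sum>i\<in>UNIV. B (br7 (g i) (g j)) X * B (br7 (g i) (g j)) Y)"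
      by (rule sum.cong, simp, rule riesz_indep[OF ip of og lin_B_comp[OF ip br7_lin1] lin_B_comp[OF ip br7_lin1]])
    also have "\<dots> = (\<Sum>i\<in>UNIV. \<Sum>j\<in>UNIV. B (br7 (g i) (g j)) X * B (br7 (g i) (g j)) Y)"
      by (rule sum.swap)
    finally show ?thesis .
  qed
  show ?thesis unfolding ricci_form_def T1 T2 ..
qed

section \<open>Gram-Schmidt\<close>

definition gs_step :: "(real^7 \<Rightarrow> real^7 \<Rightarrow> real) \<Rightarrow> real^7 \<Rightarrow> (real^7) set \<Rightarrow> real^7" where
  "gs_step B w S = w - (\<Sum>u\<in>S. (B w u / B u u) *\<^sub>R u)"

lemma gs_orth:
  assumes ip: "inner_product_on B" and fin: "finite S"
    and pw: "\<forall>u\<in>S. \<forall>u'\<in>S. u \<noteq> u' \<longrightarrow> B u u' = 0" and nz: "\<forall>u\<in>S. u \<noteq> 0" and v: "v \<in> S"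
  shows "B (gs_step B w S) v = 0"
proof -
  have "B (gs_step B w S) v = B w v - (\<Sum>u\<in>S. (B w u / B u u) * B u v)"
    unfolding gs_step_def by (simp add: B_simps[OF ip])
  also have "(\<Sum>u\<in>S. (B w u / B u u) * B u v) = (B w v / B v v) * B v v + (\<Sum>u\<in>S-{v}. (B w u / B u u) * B u v)"
    by (rule sum.remove[OF fin v])
  also have "(\<Sum>u\<in>S-{v}. (B w u / B u u) * B u v) = 0"
    using pw v by (intro sum.neutral) auto
  also have "B v v \<noteq> 0" using B_pos[OF ip] nz v by fastforce
  ultimately show ?thesis by simp
qed

lemma gs_comp:
  assumes "\<forall>u\<in>S. u $ j = 0"
  shows "gs_step B w S $ j = w $ j"
  unfolding gs_step_def using assms by (simp add: sum_component)

lemma gs_back: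
  assumes ip: "inner_product_on B"
    and h1: "B x (gs_step B w S) = 0" and h2: "\<forall>s\<in>S. B x s = 0"
  shows "B x w = 0"
proof -
  have eq: "w = gs_step B w S + (\<Sum>u\<in>S. (B w u / B u u) *\<^sub>R u)" unfolding gs_step_def by simp
  have "B x w = B x (gs_step B w S + (\<Sum>u\<in>S. (B w u / B u u) *\<^sub>R u))"
    using arg_cong[OF eq, of "B x"] .
  also have "\<dots> = B x (gs_step B w S) + (\<Sum>u\<in>S. (B w u / B u u) * B x u)"
    by (simp only: B_add2[OF ip] B_sum2[OF ip] B_scale2[OF ip])
  also have "\<dots> = 0" using h1 h2 by simp
  finally show ?thesis .
qed


section \<open>Adapted orthonormal basis\<close>

definition rk :: "7 \<Rightarrow> nat" where
  "rk i = (if i = 1 then 1 else if i = 2 then 2 else if i = 3 then 3 else if i = 4 then 4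
           else if i = 5 then 5 else if i = 6 then 6 else 7)"

lemma rk_simps[simp]: "rk 1 = 1" "rk 2 = 2" "rk 3 = 3" "rk 4 = 4" "rk 5 = 5" "rk 6 = 6" "rk 7 = 7"
  by (simp_all add: rk_def)

lemma adapted_basis:
  assumes ip: "inner_product_on B"
  shows "\<exists>g. orthonormal_basis B g \<and> (\<forall>i j. rk j < rk i \<longrightarrow> g i $ j = 0) \<and> (\<forall>i. g i $ i > 0)
           \<and> (\<forall>i j. rk i < rk j \<longrightarrow> B (g i) (axis j 1) = 0)"
proof -
  define u7 where "u7 = (axis 7 1 :: real^7)"
  define u6 where "u6 = gs_step B (axis 6 1) {u7}"
  define u5 where "u5 = gs_step B (axis 5 1) {u6,u7}"
  define u4 where "u4 = gs_step B (axis 4 1) {u5,u6,u7}"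
  define u3 where "u3 = gs_step B (axis 3 1) {u4,u5,u6,u7}"
  define u2 where "u2 = gs_step B (axis 2 1) {u3,u4,u5,u6,u7}"
  define u1 where "u1 = gs_step B (axis 1 1) {u2,u3,u4,u5,u6,u7}"
  have c7: "u7 $ 7 = 1" "u7 $ 1 = 0" "u7 $ 2 = 0" "u7 $ 3 = 0" "u7 $ 4 = 0" "u7 $ 5 = 0" "u7 $ 6 = 0" unfolding u7_def by (simp_all add: axis_def)
  have c6: "u6 $ 1 = 0" "u6 $ 2 = 0" "u6 $ 3 = 0" "u6 $ 4 = 0" "u6 $ 5 = 0" "u6 $ 6 = 1" unfolding u6_def by (simp_all add: gs_comp c7 axis_def)
  have c5: "u5 $ 1 = 0" "u5 $ 2 = 0" "u5 $ 3 = 0" "u5 $ 4 = 0" "u5 $ 5 = 1" unfolding u5_def by (simp_all add: gs_comp c6 c7 axis_def)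
  have c4: "u4 $ 1 = 0" "u4 $ 2 = 0" "u4 $ 3 = 0" "u4 $ 4 = 1" unfolding u4_def by (simp_all add: gs_comp c5 c6 c7 axis_def)
  have c3: "u3 $ 1 = 0" "u3 $ 2 = 0" "u3 $ 3 = 1" unfolding u3_def by (simp_all add: gs_comp c4 c5 c6 c7 axis_def)
  have c2: "u2 $ 1 = 0" "u2 $ 2 = 1" unfolding u2_def by (simp_all add: gs_comp c3 c4 c5 c6 c7 axis_def)
  have c1: "u1 $ 1 = 1" unfolding u1_def by (simp_all add: gs_comp c2 c3 c4 c5 c6 c7 axis_def)
  have n7: "u7 \<noteq> 0" using c7(1) by auto
  have n6: "u6 \<noteq> 0" using c6(6) by auto
  have n5: "u5 \<noteq> 0" using c5(5) by auto
  have n4: "u4 \<noteq> 0" using c4(4) by auto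
  have n3: "u3 \<noteq> 0" using c3(3) by auto
  have n2: "u2 \<noteq> 0" using c2(2) by auto
  have n1: "u1 \<noteq> 0" using c1(1) by auto
  have pw6: "\<forall>u\<in>{u7}. \<forall>v\<in>{u7}. u \<noteq> v \<longrightarrow> B u v = 0"
    by simp
  have O6: "B u6 u7 = 0"
    unfolding u6_def by (rule gs_orth[OF ip _ pw6], simp, simp add: n7, simp)+
  have R6: "B u7 u6 = 0" using O6 B_sym[OF ip, of u6] by simp_all
  have pw5: "\<forall>u\<in>{u6,u7}. \<forall>v\<in>{u6,u7}. u \<noteq> v \<longrightarrow> B u v = 0"
    by (auto simp: O6 R6)
  have O5: "B u5 u6 = 0" "B u5 u7 = 0"
    unfolding u5_def by (rule gs_orth[OF ip _ pw5], simp, simp add: n6 n7, simp)+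
  have R5: "B u6 u5 = 0" "B u7 u5 = 0" using O5 B_sym[OF ip, of u5] by simp_all
  have pw4: "\<forall>u\<in>{u5,u6,u7}. \<forall>v\<in>{u5,u6,u7}. u \<noteq> v \<longrightarrow> B u v = 0"
    by (auto simp: O5 O6 R5 R6)
  have O4: "B u4 u5 = 0" "B u4 u6 = 0" "B u4 u7 = 0"
    unfolding u4_def by (rule gs_orth[OF ip _ pw4], simp, simp add: n5 n6 n7, simp)+
  have R4: "B u5 u4 = 0" "B u6 u4 = 0" "B u7 u4 = 0" using O4 B_sym[OF ip, of u4] by simp_all
  have pw3: "\<forall>u\<in>{u4,u5,u6,u7}. \<forall>v\<in>{u4,u5,u6,u7}. u \<noteq> v \<longrightarrow> B u v = 0"
    by (auto simp: O4 O5 O6 R4 R5 R6)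
  have O3: "B u3 u4 = 0" "B u3 u5 = 0" "B u3 u6 = 0" "B u3 u7 = 0"
    unfolding u3_def by (rule gs_orth[OF ip _ pw3], simp, simp add: n4 n5 n6 n7, simp)+
  have R3: "B u4 u3 = 0" "B u5 u3 = 0" "B u6 u3 = 0" "B u7 u3 = 0" using O3 B_sym[OF ip, of u3] by simp_all
  have pw2: "\<forall>u\<in>{u3,u4,u5,u6,u7}. \<forall>v\<in>{u3,u4,u5,u6,u7}. u \<noteq> v \<longrightarrow> B u v = 0"
    by (auto simp: O3 O4 O5 O6 R3 R4 R5 R6)
  have O2: "B u2 u3 = 0" "B u2 u4 = 0" "B u2 u5 = 0" "B u2 u6 = 0" "B u2 u7 = 0"
    unfolding u2_def by (rule gs_orth[OF ip _ pw2], simp, simp add: n3 n4 n5 n6 n7, simp)+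
  have R2: "B u3 u2 = 0" "B u4 u2 = 0" "B u5 u2 = 0" "B u6 u2 = 0" "B u7 u2 = 0" using O2 B_sym[OF ip, of u2] by simp_all
  have pw1: "\<forall>u\<in>{u2,u3,u4,u5,u6,u7}. \<forall>v\<in>{u2,u3,u4,u5,u6,u7}. u \<noteq> v \<longrightarrow> B u v = 0"
    by (auto simp: O2 O3 O4 O5 O6 R2 R3 R4 R5 R6)
  have O1: "B u1 u2 = 0" "B u1 u3 = 0" "B u1 u4 = 0" "B u1 u5 = 0" "B u1 u6 = 0" "B u1 u7 = 0"
    unfolding u1_def by (rule gs_orth[OF ip _ pw1], simp, simp add: n2 n3 n4 n5 n6 n7, simp)+
  have R1: "B u2 u1 = 0" "B u3 u1 = 0" "B u4 u1 = 0" "B u5 u1 = 0" "B u6 u1 = 0" "B u7 u1 = 0" using O1 B_sym[OF ip, of u1] by simp_all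
  have E6_7: "B u6 (axis 7 1) = 0" using O6 unfolding u7_def by simp
  have E5_7: "B u5 (axis 7 1) = 0" using O5 unfolding u7_def by simp
  have E5_6: "B u5 (axis 6 1) = 0"
    by (rule gs_back[OF ip, of _ _ "{u7}"], fold u6_def, simp add: O5, simp add: O5)
  have E4_7: "B u4 (axis 7 1) = 0" using O4 unfolding u7_def by simp
  have E4_6: "B u4 (axis 6 1) = 0"
    by (rule gs_back[OF ip, of _ _ "{u7}"], fold u6_def, simp add: O4, simp add: O4)
  have E4_5: "B u4 (axis 5 1) = 0"
    by (rule gs_back[OF ip, of _ _ "{u6,u7}"], fold u5_def, simp add: O4, simp add: O4)
  have E3_7: "B u3 (axis 7 1) = 0" using O3 unfolding u7_def by simp
  have E3_6: "B u3 (axis 6 1) = 0"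
    by (rule gs_back[OF ip, of _ _ "{u7}"], fold u6_def, simp add: O3, simp add: O3)
  have E3_5: "B u3 (axis 5 1) = 0"
    by (rule gs_back[OF ip, of _ _ "{u6,u7}"], fold u5_def, simp add: O3, simp add: O3)
  have E3_4: "B u3 (axis 4 1) = 0"
    by (rule gs_back[OF ip, of _ _ "{u5,u6,u7}"], fold u4_def, simp add: O3, simp add: O3)
  have E2_7: "B u2 (axis 7 1) = 0" using O2 unfolding u7_def by simp
  have E2_6: "B u2 (axis 6 1) = 0"
    by (rule gs_back[OF ip, of _ _ "{u7}"], fold u6_def, simp add: O2, simp add: O2)
  have E2_5: "B u2 (axis 5 1) = 0"
    by (rule gs_back[OF ip, of _ _ "{u6,u7}"], fold u5_def, simp add: O2, simp add: O2)
  have E2_4: "B u2 (axis 4 1) = 0"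
    by (rule gs_back[OF ip, of _ _ "{u5,u6,u7}"], fold u4_def, simp add: O2, simp add: O2)
  have E2_3: "B u2 (axis 3 1) = 0"
    by (rule gs_back[OF ip, of _ _ "{u4,u5,u6,u7}"], fold u3_def, simp add: O2, simp add: O2)
  have E1_7: "B u1 (axis 7 1) = 0" using O1 unfolding u7_def by simp
  have E1_6: "B u1 (axis 6 1) = 0"
    by (rule gs_back[OF ip, of _ _ "{u7}"], fold u6_def, simp add: O1, simp add: O1)
  have E1_5: "B u1 (axis 5 1) = 0"
    by (rule gs_back[OF ip, of _ _ "{u6,u7}"], fold u5_def, simp add: O1, simp add: O1)
  have E1_4: "B u1 (axis 4 1) = 0"
    by (rule gs_back[OF ip, of _ _ "{u5,u6,u7}"], fold u4_def, simp add: O1, simp add: O1)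
  have E1_3: "B u1 (axis 3 1) = 0"
    by (rule gs_back[OF ip, of _ _ "{u4,u5,u6,u7}"], fold u3_def, simp add: O1, simp add: O1)
  have E1_2: "B u1 (axis 2 1) = 0"
    by (rule gs_back[OF ip, of _ _ "{u3,u4,u5,u6,u7}"], fold u2_def, simp add: O1, simp add: O1)
  define U where "U i = (if i = 1 then u1 else if i = 2 then u2 else if i = 3 then u3 else if i = 4 then u4
           else if i = 5 then u5 else if i = 6 then u6 else u7)" for i :: 7
  have U_simps: "U 1 = u1" "U 2 = u2" "U 3 = u3" "U 4 = u4" "U 5 = u5" "U 6 = u6" "U 7 = u7"
    by (simp_all add: U_def)
  have Upos: "B (U i) (U i) > 0" for i
    using n1 n2 n3 n4 n5 n6 n7 B_pos[OF ip] unfolding U_def by auto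
  define g where "g i = (1 / sqrt (B (U i) (U i))) *\<^sub>R U i" for i
  have Uorth: "i \<noteq> j \<Longrightarrow> B (U i) (U j) = 0" for i j
    using cases7[of i] cases7[of j] by (elim disjE) (simp_all add: U_simps O1 O2 O3 O4 O5 O6 R1 R2 R3 R4 R5 R6)
  have on: "orthonormal_basis B g"
    unfolding orthonormal_basis_def
  proof (intro allI)
    fix i j
    show "B (g i) (g j) = (if i = j then 1 else 0)"
    proof (cases "i = j")
      case True
      have p: "B (U i) (U i) > 0" by (rule Upos)
      have "B (g i) (g i) = (1 / sqrt (B (U i) (U i)))^2 * B (U i) (U i)"
        unfolding g_def by (simp add: B_simps[OF ip] power2_eq_square)
      also have "\<dots> = 1" using p by (simp add: power_divide)
      finally show ?thesis using True by simp
    next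
      case False
      then show ?thesis unfolding g_def by (simp add: B_simps[OF ip] Uorth)
    qed
  qed
  have tri: "rk j < rk i \<longrightarrow> g i $ j = 0" for i j
  proof -
    have "rk j < rk i \<longrightarrow> U i $ j = 0"
      using cases7[of i] cases7[of j] by (elim disjE) (simp_all add: U_simps c1 c2 c3 c4 c5 c6 c7)
    then show ?thesis unfolding g_def by simp
  qed
  have diag: "g i $ i > 0" for i
  proof -
    have "U i $ i = 1"
      using cases7[of i] by (elim disjE) (simp_all add: U_simps c1 c2 c3 c4 c5 c6 c7)
    then show ?thesis unfolding g_def using Upos[of i] by simp
  qed
  have perp: "rk i < rk j \<longrightarrow> B (g i) (axis j 1) = 0" for i j
  proof -
    have "rk i < rk j \<longrightarrow> B (U i) (axis j 1) = 0"
      using cases7[of i] cases7[of j] by (elim disjE) (simp_all add: U_simps E1_2 E1_3 E1_4 E1_5 E1_6 E1_7 E2_3 E2_4 E2_5 E2_6 E2_7 E3_4 E3_5 E3_6 E3_7 E4_5 E4_6 E4_7 E5_6 E5_7 E6_7)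
    then show ?thesis unfolding g_def by (simp add: B_simps[OF ip])
  qed
  show ?thesis using on tri diag perp by blast
qed

section \<open>Derivations\<close>

definition dg :: "7 \<Rightarrow> real" where
  "dg i = (if i = 1 then 1 else if i = 2 then 2 else if i = 3 then 3 else if i = 4 then 3
           else if i = 5 then 4 else if i = 6 then 5 else 7)"

lemma dg_simps[simp]: "dg 1 = 1" "dg 2 = 2" "dg 3 = 3" "dg 4 = 3" "dg 5 = 4" "dg 6 = 5" "dg 7 = 7"
  by (simp_all add: dg_def)

lemma ax_comp: "axis i (1::real) $ j = (if j = i then 1 else 0)"
  by (simp add: axis_def)

lemma br7_ax_1_2: "br7 (axis 1 1) (axis 2 1) = axis 4 1"
  by (simp add: vec_eq_iff br7_def axis_def)
lemma br7_ax_1_3: "br7 (axis 1 1) (axis 3 1) = 0"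
  by (simp add: vec_eq_iff br7_def axis_def)
lemma br7_ax_1_4: "br7 (axis 1 1) (axis 4 1) = axis 5 1"
  by (simp add: vec_eq_iff br7_def axis_def)
lemma br7_ax_1_5: "br7 (axis 1 1) (axis 5 1) = axis 6 1"
  by (simp add: vec_eq_iff br7_def axis_def)
lemma br7_ax_1_6: "br7 (axis 1 1) (axis 6 1) = 0"
  by (simp add: vec_eq_iff br7_def axis_def)
lemma br7_ax_1_7: "br7 (axis 1 1) (axis 7 1) = 0"
  by (simp add: vec_eq_iff br7_def axis_def)
lemma br7_ax_2_3: "br7 (axis 2 1) (axis 3 1) = axis 6 1"
  by (simp add: vec_eq_iff br7_def axis_def)
lemma br7_ax_2_4: "br7 (axis 2 1) (axis 4 1) = axis 6 1"
  by (simp add: vec_eq_iff br7_def axis_def)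
lemma br7_ax_2_6: "br7 (axis 2 1) (axis 6 1) = axis 7 1"
  by (simp add: vec_eq_iff br7_def axis_def)
lemma br7_ax_2_7: "br7 (axis 2 1) (axis 7 1) = 0"
  by (simp add: vec_eq_iff br7_def axis_def)
lemma br7_ax_3_4: "br7 (axis 3 1) (axis 4 1) = 0"
  by (simp add: vec_eq_iff br7_def axis_def)

lemma der_entries:
  assumes der: "is_derivation br7 D"
  shows "\<forall>i j. dg i \<le> dg j \<longrightarrow> D (axis j 1) $ i = (if i = j then D (axis 1 1) $ 1 * dg j else 0)"
proof -
  have lD: "linear D" and dD: "\<And>x y. D (br7 x y) = br7 (D x) y + br7 x (D y)"
    using der unfolding is_derivation_def by auto
  have q_1_2: "D (axis 4 1) $ 1 = 0" "D (axis 4 1) $ 2 = 0" "D (axis 4 1) $ 3 = 0" "D (axis 4 1) $ 4 = D (axis 1 1) $ 1 + D (axis 2 1) $ 2" "D (axis 4 1) $ 5 = D (axis 2 1) $ 4" "D (axis 4 1) $ 6 = D (axis 2 1) $ 5 - D (axis 1 1) $ 3 - D (axis 1 1) $ 4" "D (axis 4 1) $ 7 = - D (axis 1 1) $ 6"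
    using dD[of "axis 1 1" "axis 2 1"] unfolding br7_ax_1_2 by (simp_all add: vec_eq_iff br7_def ax_comp linear_neg[OF lD] linear_0[OF lD] all7)
  have q_1_3: "0 = 0" "0 = 0" "0 = 0" "0 = D (axis 3 1) $ 2" "0 = D (axis 3 1) $ 4" "0 = D (axis 3 1) $ 5 + D (axis 1 1) $ 2" "0 = 0"
    using dD[of "axis 1 1" "axis 3 1"] unfolding br7_ax_1_3 by (simp_all add: vec_eq_iff br7_def ax_comp linear_neg[OF lD] linear_0[OF lD] all7)
  have q_1_4: "D (axis 5 1) $ 1 = 0" "D (axis 5 1) $ 2 = 0" "D (axis 5 1) $ 3 = 0" "D (axis 5 1) $ 4 = D (axis 4 1) $ 2" "D (axis 5 1) $ 5 = D (axis 1 1) $ 1 + D (axis 4 1) $ 4" "D (axis 5 1) $ 6 = D (axis 4 1) $ 5 + D (axis 1 1) $ 2" "D (axis 5 1) $ 7 = D (axis 1 1) $ 5"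
    using dD[of "axis 1 1" "axis 4 1"] unfolding br7_ax_1_4 by (simp_all add: vec_eq_iff br7_def ax_comp linear_neg[OF lD] linear_0[OF lD] all7)
  have q_1_5: "D (axis 6 1) $ 1 = 0" "D (axis 6 1) $ 2 = 0" "D (axis 6 1) $ 3 = 0" "D (axis 6 1) $ 4 = D (axis 5 1) $ 2" "D (axis 6 1) $ 5 = D (axis 5 1) $ 4" "D (axis 6 1) $ 6 = D (axis 1 1) $ 1 + D (axis 5 1) $ 5" "D (axis 6 1) $ 7 = - D (axis 1 1) $ 4"
    using dD[of "axis 1 1" "axis 5 1"] unfolding br7_ax_1_5 by (simp_all add: vec_eq_iff br7_def ax_comp linear_neg[OF lD] linear_0[OF lD] all7)
  have q_1_6: "0 = 0" "0 = 0" "0 = 0" "0 = D (axis 6 1) $ 2" "0 = D (axis 6 1) $ 4" "0 = D (axis 6 1) $ 5" "0 = D (axis 1 1) $ 2"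
    using dD[of "axis 1 1" "axis 6 1"] unfolding br7_ax_1_6 by (simp_all add: vec_eq_iff br7_def ax_comp linear_neg[OF lD] linear_0[OF lD] all7)
  have q_1_7: "0 = 0" "0 = 0" "0 = 0" "0 = D (axis 7 1) $ 2" "0 = D (axis 7 1) $ 4" "0 = D (axis 7 1) $ 5" "0 = 0"
    using dD[of "axis 1 1" "axis 7 1"] unfolding br7_ax_1_7 by (simp_all add: vec_eq_iff br7_def ax_comp linear_neg[OF lD] linear_0[OF lD] all7)
  have q_2_3: "D (axis 6 1) $ 1 = 0" "D (axis 6 1) $ 2 = 0" "D (axis 6 1) $ 3 = 0" "D (axis 6 1) $ 4 = - D (axis 3 1) $ 1" "D (axis 6 1) $ 5 = 0" "D (axis 6 1) $ 6 = D (axis 2 1) $ 2 + D (axis 3 1) $ 3 + D (axis 3 1) $ 4" "D (axis 6 1) $ 7 = D (axis 3 1) $ 6"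
    using dD[of "axis 2 1" "axis 3 1"] unfolding br7_ax_2_3 by (simp_all add: vec_eq_iff br7_def ax_comp linear_neg[OF lD] linear_0[OF lD] all7)
  have q_2_4: "D (axis 6 1) $ 1 = 0" "D (axis 6 1) $ 2 = 0" "D (axis 6 1) $ 3 = 0" "D (axis 6 1) $ 4 = - D (axis 4 1) $ 1" "D (axis 6 1) $ 5 = D (axis 2 1) $ 1" "D (axis 6 1) $ 6 = D (axis 4 1) $ 3 + D (axis 2 1) $ 2 + D (axis 4 1) $ 4" "D (axis 6 1) $ 7 = D (axis 4 1) $ 6 + D (axis 2 1) $ 5"
    using dD[of "axis 2 1" "axis 4 1"] unfolding br7_ax_2_4 by (simp_all add: vec_eq_iff br7_def ax_comp linear_neg[OF lD] linear_0[OF lD] all7)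
  have q_2_6: "D (axis 7 1) $ 1 = 0" "D (axis 7 1) $ 2 = 0" "D (axis 7 1) $ 3 = 0" "D (axis 7 1) $ 4 = - D (axis 6 1) $ 1" "D (axis 7 1) $ 5 = 0" "D (axis 7 1) $ 6 = D (axis 6 1) $ 3 + D (axis 6 1) $ 4" "D (axis 7 1) $ 7 = D (axis 2 1) $ 2 + D (axis 6 1) $ 6"
    using dD[of "axis 2 1" "axis 6 1"] unfolding br7_ax_2_6 by (simp_all add: vec_eq_iff br7_def ax_comp linear_neg[OF lD] linear_0[OF lD] all7)
  have q_2_7: "0 = 0" "0 = 0" "0 = 0" "0 = - D (axis 7 1) $ 1" "0 = 0" "0 = D (axis 7 1) $ 3 + D (axis 7 1) $ 4" "0 = D (axis 7 1) $ 6"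
    using dD[of "axis 2 1" "axis 7 1"] unfolding br7_ax_2_7 by (simp_all add: vec_eq_iff br7_def ax_comp linear_neg[OF lD] linear_0[OF lD] all7)
  have q_3_4: "0 = 0" "0 = 0" "0 = 0" "0 = 0" "0 = D (axis 3 1) $ 1" "0 = - D (axis 4 1) $ 2 + D (axis 3 1) $ 2" "0 = D (axis 3 1) $ 5"
    using dD[of "axis 3 1" "axis 4 1"] unfolding br7_ax_3_4 by (simp_all add: vec_eq_iff br7_def ax_comp linear_neg[OF lD] linear_0[OF lD] all7)
  note Q = q_1_2 q_1_3 q_1_4 q_1_5 q_1_6 q_1_7 q_2_3 q_2_4 q_2_6 q_2_7 q_3_4
  have m12: "D (axis 2 1) $ 1 = 0" using Q by linarith
  have m22: "D (axis 2 1) $ 2 = D (axis 1 1) $ 1 * 2" using Q by linarith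
  have m13: "D (axis 3 1) $ 1 = 0" using Q by linarith
  have m23: "D (axis 3 1) $ 2 = 0" using Q by linarith
  have m33: "D (axis 3 1) $ 3 = D (axis 1 1) $ 1 * 3" using Q by linarith
  have m43: "D (axis 3 1) $ 4 = 0" using Q by linarith
  have m14: "D (axis 4 1) $ 1 = 0" using Q by linarith
  have m24: "D (axis 4 1) $ 2 = 0" using Q by linarith
  have m34: "D (axis 4 1) $ 3 = 0" using Q by linarith
  have m44: "D (axis 4 1) $ 4 = D (axis 1 1) $ 1 * 3" using Q by linarith
  have m15: "D (axis 5 1) $ 1 = 0" using Q by linarith
  have m25: "D (axis 5 1) $ 2 = 0" using Q by linarith
  have m35: "D (axis 5 1) $ 3 = 0" using Q by linarith
  have m45: "D (axis 5 1) $ 4 = 0" using Q by linarith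
  have m55: "D (axis 5 1) $ 5 = D (axis 1 1) $ 1 * 4" using Q by linarith
  have m16: "D (axis 6 1) $ 1 = 0" using Q by linarith
  have m26: "D (axis 6 1) $ 2 = 0" using Q by linarith
  have m36: "D (axis 6 1) $ 3 = 0" using Q by linarith
  have m46: "D (axis 6 1) $ 4 = 0" using Q by linarith
  have m56: "D (axis 6 1) $ 5 = 0" using Q by linarith
  have m66: "D (axis 6 1) $ 6 = D (axis 1 1) $ 1 * 5" using Q by linarith
  have m17: "D (axis 7 1) $ 1 = 0" using Q by linarith
  have m27: "D (axis 7 1) $ 2 = 0" using Q by linarith
  have m37: "D (axis 7 1) $ 3 = 0" using Q by linarith
  have m47: "D (axis 7 1) $ 4 = 0" using Q by linarith
  have m57: "D (axis 7 1) $ 5 = 0" using Q by linarith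
  have m67: "D (axis 7 1) $ 6 = 0" using Q by linarith
  have m77: "D (axis 7 1) $ 7 = D (axis 1 1) $ 1 * 7" using Q by linarith
  show ?thesis
  proof (intro allI impI)
    fix i j :: 7
    assume "dg i \<le> dg j"
    then show "D (axis j 1) $ i = (if i = j then D (axis 1 1) $ 1 * dg j else 0)"
      using cases7[of i] cases7[of j] by (elim disjE) (simp_all add: m12 m22 m13 m23 m33 m43 m14 m24 m34 m44 m15 m25 m35 m45 m55 m16 m26 m36 m46 m56 m66 m17 m27 m37 m47 m57 m67 m77)
  qed
qed

section \<open>Eigenbasis of D\<close>

lemma axis_expand: "(w::real^7) = (\<Sum>j\<in>UNIV. w$j *\<^sub>R axis j 1)"
  by (simp add: vec_eq_iff sum_component ax_comp if_distrib cong: if_cong)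

lemma D_comp:
  assumes lD: "linear D"
  shows "D (x::real^7) $ i = (\<Sum>j\<in>UNIV. x$j * D (axis j 1) $ i)"
proof -
  have "D x = D (\<Sum>j\<in>UNIV. x$j *\<^sub>R axis j 1)" using arg_cong[OF axis_expand[of x], of D] .
  also have "\<dots> = (\<Sum>j\<in>UNIV. x$j *\<^sub>R D (axis j 1))"
    by (simp add: linear_sum[OF lD] linear_cmul[OF lD])
  finally show ?thesis by (simp add: sum_component)
qed

lemma B_axis_expand:
  assumes ip: "inner_product_on B"
  shows "B u (w::real^7) = (\<Sum>j\<in>UNIV. w$j * B u (axis j 1))"
proof -
  have "B u w = B u (\<Sum>j\<in>UNIV. w$j *\<^sub>R axis j 1)" using arg_cong[OF axis_expand[of w], of "B u"] .
  also have "\<dots> = (\<Sum>j\<in>UNIV. w$j * B u (axis j 1))"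
    by (simp add: B_sum2[OF ip] B_scale2[OF ip])
  finally show ?thesis .
qed

lemma mono1: "\<not> rk j < rk k \<Longrightarrow> dg k \<le> dg j"
  using cases7[of j] cases7[of k] by (elim disjE) simp_all
lemma mono2: "dg i < dg j \<Longrightarrow> rk i < rk j"
  using cases7[of i] cases7[of j] by (elim disjE) simp_all

lemma D_eigen:
  assumes ip: "inner_product_on B" and og: "orthonormal_basis B g"
    and tri: "\<forall>i j. rk j < rk i \<longrightarrow> g i $ j = 0"
    and perp: "\<forall>i j. rk i < rk j \<longrightarrow> B (g i) (axis j 1) = 0"
    and lD: "linear D" and Dsym: "\<forall>X Y. B (D X) Y = B X (D Y)"
    and ent: "\<forall>i j. dg i \<le> dg j \<longrightarrow> D (axis j 1) $ i = (if i = j then t * dg j else 0)"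
  shows "D (g k) = (t * dg k) *\<^sub>R g k"
proof -
  define P where "P w \<longleftrightarrow> (\<forall>i. dg i \<le> dg k \<longrightarrow> w $ i = 0)" for w :: "real^7"
  have a: "B (g k) w = 0" if "P w" for w
  proof -
    have "B (g k) w = (\<Sum>j\<in>UNIV. w$j * B (g k) (axis j 1))" by (rule B_axis_expand[OF ip])
    also have "\<dots> = 0"
    proof (rule sum.neutral, intro ballI)
      fix j
      show "w$j * B (g k) (axis j 1) = 0"
      proof (cases "dg j \<le> dg k")
        case True then show ?thesis using that unfolding P_def by simp
      next
        case False then have "rk k < rk j" using mono2[of k j] by simp
        then show ?thesis using perp by simp
      qed
    qed
    finally show ?thesis .
  qed
  have b: "P (D w)" if "P w" for w
    unfolding P_def
  proof (intro allI impI)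
    fix i assume i: "dg i \<le> dg k"
    have "D w $ i = (\<Sum>j\<in>UNIV. w$j * D (axis j 1) $ i)" by (rule D_comp[OF lD])
    also have "\<dots> = 0"
    proof (rule sum.neutral, intro ballI)
      fix j
      show "w$j * D (axis j 1) $ i = 0"
      proof (cases "dg j \<le> dg k")
        case True then show ?thesis using that unfolding P_def by simp
      next
        case False
        then have "dg i \<le> dg j" "i \<noteq> j" using i by auto
        then show ?thesis using ent by simp
      qed
    qed
    finally show "D w $ i = 0" .
  qed
  define v where "v = D (g k) - (t * dg k) *\<^sub>R g k"
  have c: "P v"
    unfolding P_def
  proof (intro allI impI)
    fix i assume i: "dg i \<le> dg k"
    have "D (g k) $ i = (\<Sum>j\<in>UNIV. g k $ j * D (axis j 1) $ i)" by (rule D_comp[OF lD])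
    also have "\<dots> = (\<Sum>j\<in>UNIV. if j = i then g k $ i * (t * dg i) else 0)"
    proof (rule sum.cong, simp)
      fix j
      show "g k $ j * D (axis j 1) $ i = (if j = i then g k $ i * (t * dg i) else 0)"
      proof (cases "rk j < rk k")
        case True then show ?thesis using tri by auto
      next
        case False
        then have "dg i \<le> dg j" using mono1[of j k] i by simp
        then show ?thesis using ent by auto
      qed
    qed
    also have "\<dots> = g k $ i * (t * dg i)" by simp
    also have "\<dots> = t * dg k * g k $ i"
    proof (cases "rk i < rk k")
      case True then show ?thesis using tri by simp
    next
      case False then have "dg k \<le> dg i" using mono1 by simp
      then show ?thesis using i by simp
    qed
    finally show "v $ i = 0" unfolding v_def by simp
  qed
  have d: "B v w = 0" if "P w" for w
  proof -
    have "B v w = B (D (g k)) w - (t * dg k) * B (g k) w" unfolding v_def by (simp add: B_simps[OF ip])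
    also have "\<dots> = B (g k) (D w) - (t * dg k) * B (g k) w" using Dsym by simp
    also have "\<dots> = 0" using a[OF that] a[OF b[OF that]] by simp
    finally show ?thesis .
  qed
  have "v = 0" using d[OF c] B_self_zero[OF ip] by blast
  then show ?thesis unfolding v_def by simp
qed

lemma final_arith:
  fixes A Bb C Dd E F G H I c t k v :: real
  assumes e1: "- (A^2 + Bb^2 + C^2 + Dd^2) / 2 = c + t"
    and e2: "- (A^2 + E^2 + F^2 + G^2) / 2 = c + 2 * t"
    and e3: "- (C^2 + E^2 + I^2) / 2 = c + 3 * t"
    and e4: "A^2 / 2 - (Bb^2 + F^2 + H^2) / 2 = c + 3 * t"
    and e5: "(Bb^2 + C^2) / 2 - (Dd^2 + H^2 + I^2) / 2 = c + 4 * t"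
    and e6: "(Dd^2 + E^2 + F^2) / 2 - G^2 / 2 = c + 5 * t"
    and e7: "(G^2 + H^2 + I^2) / 2 = c + 7 * t"
    and off: "C * Bb + E * F + I * H = 0"
    and r1: "C = k * Bb" and r2: "I = k * H" and r3: "E = v * F"
    and t0: "t \<noteq> 0"
  shows False
proof -
  have n1: "A^2 + Bb^2 + C^2 + Dd^2 = -2*c - 2*t" using e1 by (simp add: field_simps)
  have n2: "A^2 + E^2 + F^2 + G^2 = -2*c - 4*t" using e2 by (simp add: field_simps)
  have n3: "C^2 + E^2 + I^2 = -2*c - 6*t" using e3 by (simp add: field_simps)
  have n4: "A^2 - (Bb^2 + F^2 + H^2) = 2*c + 6*t" using e4 by (simp add: field_simps)
  have n5: "(Bb^2 + C^2) - (Dd^2 + H^2 + I^2) = 2*c + 8*t" using e5 by (simp add: field_simps)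
  have n6: "(Dd^2 + E^2 + F^2) - G^2 = 2*c + 10*t" using e6 by (simp add: field_simps)
  have n7: "G^2 + H^2 + I^2 = 2*c + 14*t" using e7 by (simp add: field_simps)
  define P where "P = F^2"
  have P0: "P \<ge> 0" unfolding P_def by simp
  have lC: "C^2 = P - I^2 + 44/25 * t" unfolding P_def using n1 n2 n3 n4 n5 n6 n7 by linarith
  have lB: "Bb^2 = - P + I^2 + 46/25 * t" unfolding P_def using n1 n2 n3 n4 n5 n6 n7 by linarith
  have lE: "E^2 = - P + 32/25 * t" unfolding P_def using n1 n2 n3 n4 n5 n6 n7 by linarith
  have lA: "A^2 = H^2 + I^2 - 6/5 * t" unfolding P_def using n1 n2 n3 n4 n5 n6 n7 by linarith
  have sE: "E^2 = v^2 * P" unfolding P_def r3 by (simp add: power_mult_distrib)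
  have sC: "C^2 = k^2 * Bb^2" unfolding r1 by (simp add: power_mult_distrib)
  have sI: "I^2 = k^2 * H^2" unfolding r2 by (simp add: power_mult_distrib)
  have koff: "C^2 + k * v * P + I^2 = 0"
  proof -
    have h1: "k * (C * Bb + E * F + I * H) = 0" using off by simp
    have h2: "k * (C * Bb + E * F + I * H) = C^2 + k * v * P + I^2"
      unfolding P_def using r1 r2 r3 by (simp add: power2_eq_square algebra_simps)
    show ?thesis using h1 h2 by simp
  qed
  have q1: "P + 44/25 * t + k * v * P = 0" using koff lC by linarith
  have q2: "P * (1 + v^2) = 32/25 * t" using sE lE by (simp add: algebra_simps)
  have tpos: "t > 0"
  proof -
    have "P * (1 + v^2) \<ge> 0" using P0 by simp
    then have "t \<ge> 0" using q2 by simp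
    then show ?thesis using t0 by simp
  qed
  have Ppos: "P > 0"
  proof -
    have "P * (1 + v^2) > 0" using q2 tpos by simp
    then show ?thesis using P0 by (simp add: zero_less_mult_iff)
  qed
  define Q where "Q = P + 44/25 * t"
  have Qpos: "Q > 0" unfolding Q_def using Ppos tpos by simp
  have kv: "k * v * P = - Q" unfolding Q_def using q1 by linarith
  define R where "R = v^2 * P"
  have R_eq: "R = 32/25 * t - P" unfolding R_def using q2 by (simp add: algebra_simps)
  have v0: "v \<noteq> 0" using kv Qpos by auto
  have Rpos: "R > 0" unfolding R_def using v0 Ppos by simp
  have kR: "k^2 * R * P = Q^2"
  proof -
    have "(k * v * P)^2 = Q^2" using kv by simp
    then show ?thesis unfolding R_def by (simp add: power_mult_distrib power2_eq_square algebra_simps)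
  qed
  have I1: "I^2 * (1 + k^2) = Q + k^2 * (P - 46/25 * t)"
  proof -
    have "C^2 = k^2 * Bb^2" by (rule sC)
    then have "P - I^2 + 44/25 * t = k^2 * (- P + I^2 + 46/25 * t)" using lC lB by simp
    then show ?thesis unfolding Q_def by (simp add: algebra_simps)
  qed
  have HI: "H^2 + I^2 \<ge> 6/5 * t" using lA by (smt (verit) zero_le_power2)
  have "k^2 * (H^2 + I^2) = I^2 * (1 + k^2)" using sI by (simp add: algebra_simps)
  then have "Q + k^2 * (P - 46/25 * t) \<ge> k^2 * (6/5 * t)"
    using I1 HI mult_left_mono[OF HI, of "k^2"] by simp
  then have ineq1: "Q \<ge> k^2 * (76/25 * t - P)" by (simp add: algebra_simps)
  have RPpos: "R * P > 0" using Rpos Ppos by simp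
  have "Q * (R * P) \<ge> k^2 * (76/25 * t - P) * (R * P)"
    using mult_right_mono[OF ineq1, of "R * P"] RPpos by simp
  also have "k^2 * (76/25 * t - P) * (R * P) = Q^2 * (76/25 * t - P)"
    using kR by (simp add: algebra_simps)
  finally have "Q * (R * P) \<ge> Q * (Q * (76/25 * t - P))" by (simp add: power2_eq_square algebra_simps)
  then have "R * P \<ge> Q * (76/25 * t - P)" using Qpos by simp
  moreover have "Q * (76/25 * t - P) = R * P + 3344/625 * t^2"
    unfolding Q_def R_eq by (simp add: algebra_simps power2_eq_square)
  moreover have "t^2 > 0" using t0 by simp
  ultimately show False by simp
qed

section \<open>Structure constants in the adapted basis\<close>

lemma ricci_sym:
  assumes ip: "inner_product_on B"
  shows "ricci_form br7 B f X Y = ricci_form br7 B f Y X"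
proof -
  have 1: "(\<Sum>i\<in>UNIV. B (br7 X (f i)) (br7 Y (f i))) = (\<Sum>i\<in>UNIV. B (br7 Y (f i)) (br7 X (f i)))"
    by (rule sum.cong, simp, rule B_sym[OF ip])
  have 2: "(\<Sum>i\<in>UNIV. \<Sum>j\<in>UNIV. B (br7 (f i) (f j)) X * B (br7 (f i) (f j)) Y)
         = (\<Sum>i\<in>UNIV. \<Sum>j\<in>UNIV. B (br7 (f i) (f j)) Y * B (br7 (f i) (f j)) X)"
    by (simp add: mult.commute)
  show ?thesis unfolding ricci_form_def 1 2 ..
qed

lemma br7_low: "rk j \<le> 3 \<Longrightarrow> br7 x y $ j = 0"
  using cases7[of j] by (elim disjE) (simp_all add: br7_def ax_comp)

lemma brk_low:
  assumes ip: "inner_product_on B"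
    and perp: "\<forall>i j. rk i < rk j \<longrightarrow> B (g i) (axis j 1) = 0"
    and k: "rk k \<le> 3"
  shows "B (g k) (br7 x y) = 0"
proof -
  have "B (g k) (br7 x y) = (\<Sum>j\<in>UNIV. br7 x y $ j * B (g k) (axis j 1))" by (rule B_axis_expand[OF ip])
  also have "\<dots> = 0"
  proof (rule sum.neutral, intro ballI)
    fix j
    show "br7 x y $ j * B (g k) (axis j 1) = 0"
    proof (cases "rk j \<le> 3")
      case True then show ?thesis using br7_low by simp
    next
      case False then have "rk k < rk j" using k by simp
      then show ?thesis using perp by simp
    qed
  qed
  finally show ?thesis .
qed

lemma br7_self: "br7 x x = 0"
  using br7_anti[of x x] by (simp add: vec_eq_iff)

lemma B_nonneg: "inner_product_on B \<Longrightarrow> B x x \<ge> 0"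
  using B_pos[of B x] B_zero1[of B x] by (cases "x = 0") auto

lemma tzero:
  assumes ip: "inner_product_on B" and og: "orthonormal_basis B g"
    and tri: "\<forall>i j. rk j < rk i \<longrightarrow> g i $ j = 0" and diag: "\<forall>i. g i $ i > 0"
    and perp: "\<forall>i j. rk i < rk j \<longrightarrow> B (g i) (axis j 1) = 0"
    and r1: "ricci_form br7 B g (g 1) (g 1) = c" and r7: "ricci_form br7 B g (g 7) (g 7) = c"
  shows False
proof -
  have z1: "B (br7 (g i) (g j)) (g 1) = 0" for i j
    using brk_low[OF ip perp, of 1] B_sym[OF ip, of "br7 (g i) (g j)" "g 1"] by simp
  have "ricci_form br7 B g (g 1) (g 1) = - (1/2) * (\<Sum>i\<in>UNIV. B (br7 (g 1) (g i)) (br7 (g 1) (g i)))"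
    unfolding ricci_form_def z1 by simp
  moreover have "(\<Sum>i\<in>UNIV. B (br7 (g 1) (g i)) (br7 (g 1) (g i))) > 0"
  proof -
    have nz: "br7 (g 1) (g 2) \<noteq> 0"
    proof
      assume "br7 (g 1) (g 2) = 0"
      then have "br7 (g 1) (g 2) $ 4 = 0" by simp
      moreover have "br7 (g 1) (g 2) $ 4 = g 1 $ 1 * g 2 $ 2" using tri by (simp add: br7_def ax_comp)
      moreover have "g 1 $ 1 * g 2 $ 2 > 0" using diag by simp
      ultimately show False by linarith
    qed
    have p2: "B (br7 (g 1) (g 2)) (br7 (g 1) (g 2)) > 0" using B_pos[OF ip nz] .
    show ?thesis unfolding sum7
      using p2 B_nonneg[OF ip, of "br7 (g 1) (g 1)"] B_nonneg[OF ip, of "br7 (g 1) (g 3)"]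
        B_nonneg[OF ip, of "br7 (g 1) (g 4)"] B_nonneg[OF ip, of "br7 (g 1) (g 5)"]
        B_nonneg[OF ip, of "br7 (g 1) (g 6)"] B_nonneg[OF ip, of "br7 (g 1) (g 7)"] by linarith
  qed
  ultimately have cneg: "c < 0" using r1 by simp
  have g7: "br7 (g 7) y = 0" for y
    using tri by (simp add: vec_eq_iff br7_def ax_comp)
  have "ricci_form br7 B g (g 7) (g 7) = (1/4) * (\<Sum>i\<in>UNIV. \<Sum>j\<in>UNIV. B (br7 (g i) (g j)) (g 7) * B (br7 (g i) (g j)) (g 7))"
    unfolding ricci_form_def g7 by (simp add: B_zero1[OF ip])
  moreover have "(\<Sum>i\<in>UNIV. \<Sum>j\<in>UNIV. B (br7 (g i) (g j)) (g 7) * B (br7 (g i) (g j)) (g 7)) \<ge> 0"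
    by (intro sum_nonneg) simp
  ultimately have "c \<ge> 0" using r7 by simp
  then show False using cneg by simp
qed

lemma br_comp:
  assumes ip: "inner_product_on B" and og: "orthonormal_basis B g"
  shows "br7 x y $ m = (\<Sum>k\<in>UNIV. B (br7 x y) (g k) * g k $ m)"
proof -
  have "br7 x y $ m = (\<Sum>k\<in>UNIV. B (br7 x y) (g k) *\<^sub>R g k) $ m"
    using arg_cong[OF ortho_expand[OF ip og, of "br7 x y"], of "\<lambda>z. z $ m"] .
  also have "\<dots> = (\<Sum>k\<in>UNIV. B (br7 x y) (g k) * g k $ m)" by (simp add: sum_component)
  finally show ?thesis .
qed

lemma tnonzero:
  assumes ip: "inner_product_on B" and og: "orthonormal_basis B g"
    and tri: "\<forall>i j. rk j < rk i \<longrightarrow> g i $ j = 0" and diag: "\<forall>i. g i $ i > 0"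
    and perp: "\<forall>i j. rk i < rk j \<longrightarrow> B (g i) (axis j 1) = 0"
    and der: "is_derivation br7 D"
    and Dg: "\<forall>k. D (g k) = (t * dg k) *\<^sub>R g k"
    and Dsym: "\<forall>X Y. B (D X) Y = B X (D Y)"
    and ricg: "\<forall>X Y. ricci_form br7 B g X Y = c * B X Y + B (D X) Y"
    and t0: "t \<noteq> 0"
  shows False
proof -
  have gn: "B (g i) (g j) = (if i = j then 1 else 0)" for i j using og unfolding orthonormal_basis_def by simp
  have dD: "\<And>x y. D (br7 x y) = br7 (D x) y + br7 x (D y)"
    using der unfolding is_derivation_def by auto
  define s where "s i j k = B (br7 (g i) (g j)) (g k)" for i j k
  have grade: "s i j k = 0" if "dg i + dg j \<noteq> dg k" for i j k
  proof -
    have "B (D (br7 (g i) (g j))) (g k) = (t * dg i + t * dg j) * s i j k"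
      unfolding dD s_def using Dg by (simp add: br7_simps B_simps[OF ip] algebra_simps)
    moreover have "B (D (br7 (g i) (g j))) (g k) = t * dg k * s i j k"
      unfolding s_def using Dsym Dg by (simp add: B_simps[OF ip])
    ultimately have "t * (dg i + dg j - dg k) * s i j k = 0" by (simp add: algebra_simps)
    then show ?thesis using t0 that by simp
  qed
  have low: "s i j k = 0" if "rk k \<le> 3" for i j k
    unfolding s_def using brk_low[OF ip perp that] B_sym[OF ip, of "br7 (g i) (g j)" "g k"] by simp
  have same: "s i i k = 0" for i k unfolding s_def by (simp add: br7_self B_zero1[OF ip])
  have anti: "s j i k = - s i j k" for i j k unfolding s_def using br7_anti[of "g j" "g i"] by (simp add: B_simps[OF ip])
  have ricexp: "ricci_form br7 B g (g a) (g b) =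
      - (1/2) * (\<Sum>i\<in>UNIV. \<Sum>k\<in>UNIV. s a i k * s b i k) + (1/4) * (\<Sum>i\<in>UNIV. \<Sum>j\<in>UNIV. s i j a * s i j b)" for a b
  proof -
    have "B (br7 (g a) (g i)) (br7 (g b) (g i)) = (\<Sum>k\<in>UNIV. s a i k * s b i k)" for i
      unfolding s_def by (rule parseval[OF ip og])
    then show ?thesis unfolding ricci_form_def s_def by simp
  qed
  have ricd: "ricci_form br7 B g (g k) (g k) = c + t * dg k" for k
    using ricg Dg gn by (simp add: B_simps[OF ip])
  have ric34: "ricci_form br7 B g (g 3) (g 4) = 0"
    using ricg Dg gn by (simp add: B_simps[OF ip])
  have an: "s 2 1 4 = - s 1 2 4" "s 4 1 5 = - s 1 4 5" "s 3 1 5 = - s 1 3 5" "s 5 1 6 = - s 1 5 6"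
    "s 3 2 6 = - s 2 3 6" "s 4 2 6 = - s 2 4 6" "s 6 2 7 = - s 2 6 7" "s 5 4 7 = - s 4 5 7" "s 5 3 7 = - s 3 5 7"
    by (rule anti)+
  note V = grade low same an
  have e1: "- ((s 1 2 4)^2 + (s 1 4 5)^2 + (s 1 3 5)^2 + (s 1 5 6)^2) / 2 = c + t"
    using ricd[of 1] unfolding ricexp sum7 by (simp add: V power2_eq_square field_simps)
  have e2: "- ((s 1 2 4)^2 + (s 2 3 6)^2 + (s 2 4 6)^2 + (s 2 6 7)^2) / 2 = c + 2 * t"
    using ricd[of 2] unfolding ricexp sum7 by (simp add: V power2_eq_square field_simps)
  have e3: "- ((s 1 3 5)^2 + (s 2 3 6)^2 + (s 3 5 7)^2) / 2 = c + 3 * t"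
    using ricd[of 3] unfolding ricexp sum7 by (simp add: V power2_eq_square field_simps)
  have e4: "(s 1 2 4)^2 / 2 - ((s 1 4 5)^2 + (s 2 4 6)^2 + (s 4 5 7)^2) / 2 = c + 3 * t"
    using ricd[of 4] unfolding ricexp sum7 by (simp add: V power2_eq_square field_simps)
  have e5: "((s 1 4 5)^2 + (s 1 3 5)^2) / 2 - ((s 1 5 6)^2 + (s 4 5 7)^2 + (s 3 5 7)^2) / 2 = c + 4 * t"
    using ricd[of 5] unfolding ricexp sum7 by (simp add: V power2_eq_square field_simps)
  have e6: "((s 1 5 6)^2 + (s 2 3 6)^2 + (s 2 4 6)^2) / 2 - (s 2 6 7)^2 / 2 = c + 5 * t"
    using ricd[of 6] unfolding ricexp sum7 by (simp add: V power2_eq_square field_simps)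
  have e7: "((s 2 6 7)^2 + (s 4 5 7)^2 + (s 3 5 7)^2) / 2 = c + 7 * t"
    using ricd[of 7] unfolding ricexp sum7 by (simp add: V power2_eq_square field_simps)
  have off: "s 1 3 5 * s 1 4 5 + s 2 3 6 * s 2 4 6 + s 3 5 7 * s 4 5 7 = 0"
    using ric34 unfolding ricexp sum7 by (simp add: V field_simps)
  have bc: "br7 x y $ m = (\<Sum>k\<in>UNIV. B (br7 x y) (g k) * g k $ m)" for x y m
    by (rule br_comp[OF ip og])
  have g44: "g 4 $ 4 > 0" using diag by simp
  have g55: "g 5 $ 5 > 0" using diag by simp
  have g66: "g 6 $ 6 > 0" using diag by simp
  have g77: "g 7 $ 7 > 0" using diag by simp
  define k where "k = g 3 $ 4 / g 4 $ 4"
  define w where "w = g 3 - k *\<^sub>R g 4"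
  have w4: "w $ 4 = 0" unfolding w_def k_def using g44 by simp
  have w1: "w $ 1 = 0" and w2: "w $ 2 = 0" unfolding w_def using tri by simp_all
  have r1: "s 1 3 5 = k * s 1 4 5"
  proof -
    have "br7 (g 1) w $ 5 = 0" using w1 w4 by (simp add: br7_def ax_comp)
    moreover have "br7 (g 1) w $ 5 = br7 (g 1) (g 3) $ 5 - k * br7 (g 1) (g 4) $ 5"
      unfolding w_def by (simp add: br7_simps)
    moreover have "br7 (g 1) (g 3) $ 5 = s 1 3 5 * g 5 $ 5"
      unfolding bc sum7 s_def[symmetric] using tri by (simp add: V)
    moreover have "br7 (g 1) (g 4) $ 5 = s 1 4 5 * g 5 $ 5"
      unfolding bc sum7 s_def[symmetric] using tri by (simp add: V)
    ultimately have "(s 1 3 5 - k * s 1 4 5) * g 5 $ 5 = 0" by (simp add: algebra_simps)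
    then show ?thesis using g55 by simp
  qed
  have r2: "s 3 5 7 = k * s 4 5 7"
  proof -
    have "br7 w (g 5) $ 7 = 0" using w2 w4 tri by (simp add: br7_def ax_comp)
    moreover have "br7 w (g 5) $ 7 = br7 (g 3) (g 5) $ 7 - k * br7 (g 4) (g 5) $ 7"
      unfolding w_def by (simp add: br7_simps)
    moreover have "br7 (g 3) (g 5) $ 7 = s 3 5 7 * g 7 $ 7"
      unfolding bc sum7 s_def[symmetric] using tri by (simp add: V)
    moreover have "br7 (g 4) (g 5) $ 7 = s 4 5 7 * g 7 $ 7"
      unfolding bc sum7 s_def[symmetric] using tri by (simp add: V)
    ultimately have "(s 3 5 7 - k * s 4 5 7) * g 7 $ 7 = 0" by (simp add: algebra_simps)
    then show ?thesis using g77 by simp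
  qed
  define v where "v = (g 3 $ 3 + g 3 $ 4) / g 4 $ 4"
  define w' where "w' = g 3 - v *\<^sub>R g 4"
  have w'34: "w' $ 3 + w' $ 4 = 0" unfolding w'_def v_def using g44 tri by simp
  have w'1: "w' $ 1 = 0" and w'2: "w' $ 2 = 0" unfolding w'_def using tri by simp_all
  have r3: "s 2 3 6 = v * s 2 4 6"
  proof -
    have "br7 (g 2) w' $ 6 = g 2 $ 2 * (w' $ 3 + w' $ 4)" using w'1 w'2 tri by (simp add: br7_def ax_comp algebra_simps)
    then have "br7 (g 2) w' $ 6 = 0" using w'34 by simp
    moreover have "br7 (g 2) w' $ 6 = br7 (g 2) (g 3) $ 6 - v * br7 (g 2) (g 4) $ 6"
      unfolding w'_def by (simp add: br7_simps)
    moreover have "br7 (g 2) (g 3) $ 6 = s 2 3 6 * g 6 $ 6"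
      unfolding bc sum7 s_def[symmetric] using tri by (simp add: V)
    moreover have "br7 (g 2) (g 4) $ 6 = s 2 4 6 * g 6 $ 6"
      unfolding bc sum7 s_def[symmetric] using tri by (simp add: V)
    ultimately have "(s 2 3 6 - v * s 2 4 6) * g 6 $ 6 = 0" by (simp add: algebra_simps)
    then show ?thesis using g66 by simp
  qed
  show False
    by (rule final_arith[OF e1 e2 e3 e4 e5 e6 e7 off r1 r2 r3 t0])
qed

theorem mainTheorem7:
  shows "\<not> einstein_nilradical br7"
proof
  assume "einstein_nilradical br7"
  then obtain B f c D where ip: "inner_product_on B" and of: "orthonormal_basis B f"
    and der: "is_derivation br7 D"
    and ric: "\<forall>X Y. ricci_form br7 B f X Y = c * B X Y + B (D X) Y"
    unfolding einstein_nilradical_def nilsoliton_def by blast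
  have lD: "linear D" using der unfolding is_derivation_def by simp
  have Dsym: "\<forall>X Y. B (D X) Y = B X (D Y)"
  proof (intro allI)
    fix X Y
    have h1: "ricci_form br7 B f X Y = c * B X Y + B (D X) Y" using ric by blast
    have h2: "ricci_form br7 B f Y X = c * B Y X + B (D Y) X" using ric by blast
    have h3: "ricci_form br7 B f X Y = ricci_form br7 B f Y X" by (rule ricci_sym[OF ip])
    have h4: "B X Y = B Y X" by (rule B_sym[OF ip])
    have h5: "B (D Y) X = B X (D Y)" by (rule B_sym[OF ip])
    show "B (D X) Y = B X (D Y)" using h1 h2 h3 h4 h5 by simp
  qed
  obtain g where og: "orthonormal_basis B g" and tri: "\<forall>i j. rk j < rk i \<longrightarrow> g i $ j = 0"
    and diag: "\<forall>i. g i $ i > 0" and perp: "\<forall>i j. rk i < rk j \<longrightarrow> B (g i) (axis j 1) = 0"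
    using adapted_basis[OF ip] by blast
  have ricg: "\<forall>X Y. ricci_form br7 B g X Y = c * B X Y + B (D X) Y"
    using ric ricci_indep[OF ip of og] by simp
  define t where "t = D (axis 1 1) $ 1"
  have ent: "\<forall>i j. dg i \<le> dg j \<longrightarrow> D (axis j 1) $ i = (if i = j then t * dg j else 0)"
    using der_entries[OF der] unfolding t_def by simp
  have Dg: "\<forall>k. D (g k) = (t * dg k) *\<^sub>R g k"
    using D_eigen[OF ip og tri perp lD Dsym ent] by simp
  have gn: "B (g i) (g j) = (if i = j then 1 else 0)" for i j using og unfolding orthonormal_basis_def by simp
  show False
  proof (cases "t = 0")
    case True
    have r: "ricci_form br7 B g (g k) (g k) = c" for k
      using ricg Dg gn True by (simp add: B_simps[OF ip])
    show False by (rule tzero[OF ip og tri diag perp r r])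
  next
    case False
    show False by (rule tnonzero[OF ip og tri diag perp der Dg Dsym ricg False])
  qed
qed

end
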